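(* Let $\Phi=(A;A^*;\{E_i\}_{i=0}^d;\{E^*_i\}_{i=0}^d)$ be a Leonard system in $\mathcal A$ with eigenvalue sequence $\theta_0,\dots,\theta_d$, and let $p_i$, $x_i$, $m_i$ be as defined below. Then $$\sum_{r=0}^d p_i(\theta_r)p_j(\theta_r)m_r=\delta_{ij}\,x_1x_2\cdots x_i\qquad(0\le i,j\le d),$$ $$\sum_{i=0}^d\frac{p_i(\theta_r)p_i(\theta_s)}{x_1x_2\cdots x_i}=\delta_{rs}\,m_r^{-1}\qquad(0\le r,s\le d).$$
   Context: Let $\mathbb K$ be a field, $d\ge 0$ an integer, and $\mathcal A$ a $\mathbb K$-algebra isomorphic to the full matrix algebra $\mathrm{Mat}_{d+1}(\mathbb K)$; $I$ is its identity. An element of $\mathcal A$ is multiplicity-free if it has $d+1$ mutually distinct eigenvalues in $\mathbb K$. If $A$ is multiplicity-free with eigenvalues $\theta_0,\dots,\theta_d$, the primitive idempotent of $A$ associated with $\theta_i$ is $E_i=\prod_{j\ne i}(A-\theta_jI)/(\theta_i-\theta_j)$. A Leonard system in $\mathcal A$ is a sequence $\Phi=(A;A^*;\{E_i\}_{i=0}^d;\{E^*_i\}_{i=0}^d)$ such that (i) $A,A^*\in\mathcal A$ are multiplicity-free; (ii) $E_0,\dots,E_d$ is an ordering of the primitive idempotents of $A$; (iii) $E^*_0,\dots,E^*_d$ is an ordering of the primitive idempotents of $A^*$; (iv) $E_iA^*E_j=0$ if $|i-j|>1$ and $E_iA^*E_j\ne0$ if $|i-j|=1$ ($0\le i,j\le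 d$); (v) $E^*_iAE^*_j=0$ if $|i-j|>1$ and $E^*_iAE^*_j\ne0$ if $|i-j|=1$ ($0\le i,j\le d$). Here $A^*$ is merely notation (not an adjoint). $\theta_i$ is the eigenvalue of $A$ associated with $E_i$. Define $a_i=\mathrm{tr}(E^*_iA)$ ($0\le i\le d$), $x_i=\mathrm{tr}(E^*_iAE^*_{i-1}A)$ ($1\le i\le d$), $x_0=0$; polynomials $p_{-1}=0$, $p_0=1$, $\lambda p_i=p_{i+1}+a_ip_i+x_ip_{i-1}$ ($0\le i\le d$); and $m_i=\mathrm{tr}(E_iE^*_0)$ ($0\le i\le d$). Empty products equal $1$. *)

theory Defs
  imports "Jordan_Normal_Form.Matrix" "Jordan_Normal_Form.Char_Poly"
    "HOL-Computational_Algebra.Polynomial"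
begin

text \<open>The algebra is taken concretely as the full matrix algebra of
(d+1) x (d+1) matrices over a field.\<close>

definition mtrace :: "'a::comm_ring_1 mat \<Rightarrow> 'a" where
  "mtrace M = (\<Sum>i<dim_row M. M $$ (i, i))"

definition multiplicity_free :: "nat \<Rightarrow> 'a::field mat \<Rightarrow> bool" where
  "multiplicity_free d A \<longleftrightarrow> A \<in> carrier_mat (d+1) (d+1) \<and>
     (\<exists>th. inj_on th {0..d} \<and> (\<forall>i\<le>d. eigenvalue A (th i)))"

definition prim_idem :: "nat \<Rightarrow> 'a::field mat \<Rightarrow> (nat \<Rightarrow> 'a) \<Rightarrow> nat \<Rightarrow> 'a mat" where
  "prim_idem d A th i =
     foldr (\<lambda>j M. ((1 / (th i - th j)) \<cdot>\<^sub>m (A - th j \<cdot>\<^sub>m 1\<^sub>m (d+1))) * M)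
       (filter (\<lambda>j. j \<noteq> i) [0..<d+1]) (1\<^sub>m (d+1))"

definition idem_ordering :: "nat \<Rightarrow> 'a::field mat \<Rightarrow> (nat \<Rightarrow> 'a mat) \<Rightarrow> bool" where
  "idem_ordering d A E \<longleftrightarrow>
     (\<exists>th. inj_on th {0..d} \<and> (\<forall>i\<le>d. eigenvalue A (th i)) \<and>
           (\<forall>i\<le>d. E i = prim_idem d A th i))"

definition leonard_system ::
  "nat \<Rightarrow> 'a::field mat \<Rightarrow> 'a mat \<Rightarrow> (nat \<Rightarrow> 'a mat) \<Rightarrow> (nat \<Rightarrow> 'a mat) \<Rightarrow> bool" where
  "leonard_system d A As E Es \<longleftrightarrow>
     multiplicity_free d A \<and> multiplicity_free d As \<and>
     idem_ordering d A E \<and> idem_ordering d As Es \<and>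
     (\<forall>i\<le>d. \<forall>j\<le>d.
        (i > j + 1 \<or> j > i + 1 \<longrightarrow> E i * As * E j = 0\<^sub>m (d+1) (d+1)) \<and>
        (i = j + 1 \<or> j = i + 1 \<longrightarrow> E i * As * E j \<noteq> 0\<^sub>m (d+1) (d+1))) \<and>
     (\<forall>i\<le>d. \<forall>j\<le>d.
        (i > j + 1 \<or> j > i + 1 \<longrightarrow> Es i * A * Es j = 0\<^sub>m (d+1) (d+1)) \<and>
        (i = j + 1 \<or> j = i + 1 \<longrightarrow> Es i * A * Es j \<noteq> 0\<^sub>m (d+1) (d+1)))"

definition ls_a :: "'a::field mat \<Rightarrow> (nat \<Rightarrow> 'a mat) \<Rightarrow> nat \<Rightarrow> 'a" where
  "ls_a A Es i = mtrace (Es i * A)"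

definition ls_x :: "'a::field mat \<Rightarrow> (nat \<Rightarrow> 'a mat) \<Rightarrow> nat \<Rightarrow> 'a" where
  "ls_x A Es i = (if i = 0 then 0 else mtrace (Es i * A * Es (i - 1) * A))"

definition ls_m :: "(nat \<Rightarrow> 'a::field mat) \<Rightarrow> (nat \<Rightarrow> 'a mat) \<Rightarrow> nat \<Rightarrow> 'a" where
  "ls_m E Es i = mtrace (E i * Es 0)"

text \<open>p_{-1} = 0, p_0 = 1, lambda p_i = p_{i+1} + a_i p_i + x_i p_{i-1}.\<close>
fun ls_p :: "(nat \<Rightarrow> 'a::field) \<Rightarrow> (nat \<Rightarrow> 'a) \<Rightarrow> nat \<Rightarrow> 'a poly" where
  "ls_p a x 0 = 1"
| "ls_p a x (Suc 0) = [:- a 0, 1:]"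
| "ls_p a x (Suc (Suc i)) =
     [:- a (Suc i), 1:] * ls_p a x (Suc i) - Polynomial.smult (x (Suc i)) (ls_p a x i)"

end

theory Submission imports Defs begin

lemma mult_entry:
  assumes "A \<in> carrier_mat n m" "B \<in> carrier_mat m k" "i < n" "j < k"
  shows "(A * B) $$ (i, j) = (\<Sum>l<m. A $$ (i, l) * B $$ (l, j))"
  using assms by (auto simp: scalar_prod_def atLeast0LessThan intro!: sum.cong)

lemma row_col_entry:
  "i < dim_row A \<Longrightarrow> j < dim_col B \<Longrightarrow> dim_col A = dim_row B \<Longrightarrow>
    row A i \<bullet> col B j = (\<Sum>l<dim_row B. A $$ (i, l) * B $$ (l, j))"
  by (auto simp: scalar_prod_def atLeast0LessThan intro!: sum.cong)

lemma if_mult0[simp]: "(if P then a else 0) * b = (if P then a * b else (0::'a::mult_zero))"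
  "b * (if P then a else 0) = (if P then b * a else (0::'a::mult_zero))"
  by auto

lemma row_row_entry:
  "i < dim_row A \<Longrightarrow> j < dim_row B \<Longrightarrow> dim_col A = dim_col B \<Longrightarrow>
    row A i \<bullet> row B j = (\<Sum>l<dim_col B. A $$ (i, l) * B $$ (j, l))"
  by (auto simp: scalar_prod_def atLeast0LessThan intro!: sum.cong)

lemma col_col_entry:
  "i < dim_col A \<Longrightarrow> j < dim_col B \<Longrightarrow> dim_row A = dim_row B \<Longrightarrow>
    col A i \<bullet> col B j = (\<Sum>l<dim_row B. A $$ (l, i) * B $$ (l, j))"
  by (auto simp: scalar_prod_def atLeast0LessThan intro!: sum.cong)

lemma mtrace_comm:
  fixes A B :: "'a::comm_ring_1 mat"
  assumes "A \<in> carrier_mat n m" "B \<in> carrier_mat m n"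
  shows "mtrace (A * B) = mtrace (B * A)"
proof -
  have "mtrace (A * B) = (\<Sum>i<n. \<Sum>l<m. A $$ (i, l) * B $$ (l, i))"
    unfolding mtrace_def using assms by (auto simp: row_col_entry intro!: sum.cong)
  also have "\<dots> = (\<Sum>l<m. \<Sum>i<n. B $$ (l, i) * A $$ (i, l))"
    by (subst sum.swap) (simp add: mult.commute)
  also have "\<dots> = mtrace (B * A)"
    unfolding mtrace_def using assms by (auto simp: row_col_entry intro!: sum.cong)
  finally show ?thesis .
qed

definition dg :: "nat \<Rightarrow> (nat \<Rightarrow> 'a) \<Rightarrow> 'a::zero mat" where
  "dg n f = mat n n (\<lambda>(i,j). if i = j then f i else 0)"

definition un :: "nat \<Rightarrow> nat \<Rightarrow> nat \<Rightarrow> 'a::zero_neq_one mat" where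
  "un n a b = mat n n (\<lambda>(i,j). if i = a \<and> j = b then 1 else 0)"

lemma dg_carrier[simp]: "dg n f \<in> carrier_mat n n" by (simp add: dg_def)
lemma un_carrier[simp]: "un n a b \<in> carrier_mat n n" by (simp add: un_def)
lemma dg_dims[simp]: "dim_row (dg n f) = n" "dim_col (dg n f) = n" by (simp_all add: dg_def)
lemma un_dims[simp]: "dim_row (un n a b) = n" "dim_col (un n a b) = n" by (simp_all add: un_def)
lemma dg_index[simp]: "i < n \<Longrightarrow> j < n \<Longrightarrow> dg n f $$ (i,j) = (if i = j then f i else 0)"
  by (simp add: dg_def)
lemma un_index[simp]: "i < n \<Longrightarrow> j < n \<Longrightarrow> un n a b $$ (i,j) = (if i = a \<and> j = b then 1 else 0)"
  by (simp add: un_def)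

fun mp :: "nat \<Rightarrow> (nat \<Rightarrow> 'a::field) \<Rightarrow> (nat \<Rightarrow> 'a) \<Rightarrow> 'a mat \<Rightarrow> nat \<Rightarrow> 'a mat" where
  "mp n a x M 0 = 1\<^sub>m n"
| "mp n a x M (Suc 0) = M - a 0 \<cdot>\<^sub>m 1\<^sub>m n"
| "mp n a x M (Suc (Suc i)) = (M - a (Suc i) \<cdot>\<^sub>m 1\<^sub>m n) * mp n a x M (Suc i) - x (Suc i) \<cdot>\<^sub>m mp n a x M i"

lemma mp_carrier[simp]: "M \<in> carrier_mat n n \<Longrightarrow> mp n a x M i \<in> carrier_mat n n"
  by (induction n a x M i rule: mp.induct) auto

lemma dg_mult: "dg n (f::nat\<Rightarrow>'a::field) * dg n g = dg n (\<lambda>r. f r * g r)"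
  by (intro eq_matI) (auto simp: row_col_entry sum.delta sum.delta')
lemma dg_minus: "dg n (f::nat\<Rightarrow>'a::field) - dg n g = dg n (\<lambda>r. f r - g r)"
  by (intro eq_matI) auto
lemma dg_smult: "c \<cdot>\<^sub>m dg n (f::nat\<Rightarrow>'a::field) = dg n (\<lambda>r. c * f r)"
  by (intro eq_matI) auto
lemma one_dg: "1\<^sub>m n = dg n (\<lambda>r. 1)"
  by (intro eq_matI) auto

lemma mp_diag2: "mp n a x (dg n f) i = dg n (\<lambda>r. poly (ls_p a x i) (f r))
   \<and> mp n a x (dg n f) (Suc i) = dg n (\<lambda>r. poly (ls_p a x (Suc i)) (f r))"
proof (induction i)
  case 0
  then show ?case by (simp add: one_dg dg_smult dg_minus)
next
  case (Suc i)
  then show ?case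
    by (simp only: mp.simps) (simp add: one_dg dg_smult dg_minus dg_mult algebra_simps)
qed

lemma mp_diag: "mp n a x (dg n f) i = dg n (\<lambda>r. poly (ls_p a x i) (f r))"
  using mp_diag2 by blast


declare minus_carrier_mat[simp]

lemma smult_one_mult[simp]:
  fixes M :: "'a::field mat"
  assumes "M \<in> carrier_mat n n"
  shows "M * (c \<cdot>\<^sub>m 1\<^sub>m n) = c \<cdot>\<^sub>m M" "(c \<cdot>\<^sub>m 1\<^sub>m n) * M = c \<cdot>\<^sub>m M"
  using assms by (auto intro!: eq_matI simp: row_col_entry sum.delta sum.delta')

lemma conj_lemmas:
  fixes V Vi :: "'a::field mat"
  assumes V: "V \<in> carrier_mat n n" and Vi: "Vi \<in> carrier_mat n n"
    and VVi: "V * Vi = 1\<^sub>m n" and ViV: "Vi * V = 1\<^sub>m n"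
    and X: "X \<in> carrier_mat n n" and Y: "Y \<in> carrier_mat n n"
  shows "Vi * (X * Y) * V = (Vi * X * V) * (Vi * Y * V)"
    and "Vi * (X - Y) * V = Vi * X * V - Vi * Y * V"
    and "Vi * (c \<cdot>\<^sub>m X) * V = c \<cdot>\<^sub>m (Vi * X * V)"
    and "Vi * 1\<^sub>m n * V = 1\<^sub>m n"
proof -
  have "(Vi * X * V) * (Vi * Y * V) = Vi * X * (V * Vi) * Y * V"
    using V Vi X Y by (simp add: assoc_mult_mat[of _ n n _ n _ n])
  also have "\<dots> = Vi * (X * Y) * V" using V Vi X Y VVi by simp
  finally show "Vi * (X * Y) * V = (Vi * X * V) * (Vi * Y * V)" by simp
  show "Vi * (X - Y) * V = Vi * X * V - Vi * Y * V"
    using V Vi X Y by (simp add: mult_minus_distrib_mat[of _ n n _ n] minus_mult_distrib_mat[of _ n n _ _ n])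
  show "Vi * (c \<cdot>\<^sub>m X) * V = c \<cdot>\<^sub>m (Vi * X * V)"
    using V Vi X Y by (simp add: mult_smult_distrib[of _ n n _ n] mult_smult_assoc_mat[of _ n n _ n])
  show "Vi * 1\<^sub>m n * V = 1\<^sub>m n" using Vi ViV by simp
qed

lemma mp_conj2:
  fixes V Vi M :: "'a::field mat"
  assumes V: "V \<in> carrier_mat n n" and Vi: "Vi \<in> carrier_mat n n"
    and VVi: "V * Vi = 1\<^sub>m n" and ViV: "Vi * V = 1\<^sub>m n" and M: "M \<in> carrier_mat n n"
  shows "Vi * mp n a x M i * V = mp n a x (Vi * M * V) i
     \<and> Vi * mp n a x M (Suc i) * V = mp n a x (Vi * M * V) (Suc i)"
proof (induction i)
  case 0
  then show ?case using conj_lemmas[OF V Vi VVi ViV] M by simp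
next
  case (Suc i)
  note cl = conj_lemmas[OF V Vi VVi ViV]
  let ?X = "M - a (Suc (i)) \<cdot>\<^sub>m 1\<^sub>m n"
  let ?P = "mp n a x M (Suc i)"
  let ?Q = "mp n a x M i"
  have X: "?X \<in> carrier_mat n n" using M by simp
  have P: "?P \<in> carrier_mat n n" and Q: "?Q \<in> carrier_mat n n" using M by auto
  have XP: "?X * ?P \<in> carrier_mat n n" and xQ: "x (Suc i) \<cdot>\<^sub>m ?Q \<in> carrier_mat n n"
    using X P Q by auto
  have ViX: "Vi * ?X * V = Vi * M * V - a (Suc i) \<cdot>\<^sub>m 1\<^sub>m n"
    using cl(2)[OF M smult_carrier_mat[OF one_carrier_mat]] cl(3)[OF one_carrier_mat one_carrier_mat] cl(4)[OF M M]
    by simp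
  have "Vi * mp n a x M (Suc (Suc i)) * V =
     (Vi * (M - a (Suc i) \<cdot>\<^sub>m 1\<^sub>m n) * V) * (Vi * mp n a x M (Suc i) * V)
      - x (Suc i) \<cdot>\<^sub>m (Vi * mp n a x M i * V)"
    using M by (simp only: mp.simps cl(2)[OF XP xQ] cl(3)[OF Q Q] cl(1)[OF X P])
  also have "\<dots> = mp n a x (Vi * M * V) (Suc (Suc i))"
    using Suc M by (simp only: ViX mp.simps)
  finally show ?case using Suc by simp
qed

lemma mp_conj:
  fixes V Vi M :: "'a::field mat"
  assumes "V \<in> carrier_mat n n" "Vi \<in> carrier_mat n n"
    "V * Vi = 1\<^sub>m n" "Vi * V = 1\<^sub>m n" "M \<in> carrier_mat n n"
  shows "Vi * mp n a x M i * V = mp n a x (Vi * M * V) i"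
  using mp_conj2[OF assms] by blast

lemma mp_comm2:
  fixes M :: "'a::field mat"
  assumes M: "M \<in> carrier_mat n n"
  shows "M * mp n a x M i = mp n a x M i * M \<and> M * mp n a x M (Suc i) = mp n a x M (Suc i) * M"
proof (induction i)
  case 0
  then show ?case using M
    by (simp add: mult_minus_distrib_mat[of _ n n _ n] minus_mult_distrib_mat[of _ n n _ _ n]
        mult_smult_distrib[of _ n n _ n] mult_smult_assoc_mat[of _ n n _ n])
next
  case (Suc i)
  let ?X = "M - a (Suc (i)) \<cdot>\<^sub>m 1\<^sub>m n"
  let ?P = "mp n a x M (Suc i)"
  let ?Q = "mp n a x M i"
  have X: "?X \<in> carrier_mat n n" using M by simp
  have P: "?P \<in> carrier_mat n n" and Q: "?Q \<in> carrier_mat n n" using M by auto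
  have MX: "M * ?X = ?X * M" using M
    by (simp add: mult_minus_distrib_mat[of _ n n _ n] minus_mult_distrib_mat[of _ n n _ _ n]
        mult_smult_distrib[of _ n n _ n] mult_smult_assoc_mat[of _ n n _ n])
  have XPc: "?X * ?P \<in> carrier_mat n n" and xQc: "x (Suc i) \<cdot>\<^sub>m ?Q \<in> carrier_mat n n"
    using X P Q by auto
  have e1: "M * (?X * ?P) = ?X * ?P * M"
  proof -
    have "M * (?X * ?P) = (M * ?X) * ?P" using assoc_mult_mat[OF M X P] by simp
    also have "\<dots> = ?X * (M * ?P)" using MX assoc_mult_mat[OF X M P] by simp
    also have "\<dots> = ?X * (?P * M)" using Suc by simp
    also have "\<dots> = ?X * ?P * M" using assoc_mult_mat[OF X P M] by simp
    finally show ?thesis .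
  qed
  have e2: "M * (x (Suc i) \<cdot>\<^sub>m ?Q) = x (Suc i) \<cdot>\<^sub>m ?Q * M"
    using mult_smult_distrib[OF M Q] mult_smult_assoc_mat[OF Q M] Suc by simp
  have "M * (?X * ?P - x (Suc i) \<cdot>\<^sub>m ?Q) = M * (?X * ?P) - M * (x (Suc i) \<cdot>\<^sub>m ?Q)"
    by (rule mult_minus_distrib_mat[OF M XPc xQc])
  also have "\<dots> = (?X * ?P - x (Suc i) \<cdot>\<^sub>m ?Q) * M"
    unfolding e1 e2 by (rule minus_mult_distrib_mat[OF XPc xQc M, symmetric])
  finally show ?case using Suc by simp
qed

lemma mp_comm:
  fixes M :: "'a::field mat"
  assumes M: "M \<in> carrier_mat n n"
  shows "M * mp n a x M i = mp n a x M i * M"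
  using mp_comm2[OF M] by blast

lemma transpose_smult: "transpose_mat (c \<cdot>\<^sub>m A) = c \<cdot>\<^sub>m transpose_mat A"
  by (intro eq_matI) auto

lemma mp_transpose2:
  fixes M :: "'a::field mat"
  assumes M: "M \<in> carrier_mat n n"
  shows "transpose_mat (mp n a x M i) = mp n a x (transpose_mat M) i
    \<and> transpose_mat (mp n a x M (Suc i)) = mp n a x (transpose_mat M) (Suc i)"
proof (induction i)
  case 0
  then show ?case using M by (simp add: transpose_minus transpose_smult)
next
  case (Suc i)
  let ?X = "M - a (Suc (i)) \<cdot>\<^sub>m 1\<^sub>m n"
  let ?P = "mp n a x M (Suc i)"
  let ?Q = "mp n a x M i"
  have X: "?X \<in> carrier_mat n n" using M by simp
  have P: "?P \<in> carrier_mat n n" and Q: "?Q \<in> carrier_mat n n" using M by auto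
  have XP: "?X * ?P = ?P * ?X" using M P mp_comm[OF M, of a x "Suc i"]
    by (simp del: assoc_mult_mat add: left_mult_one_mat[OF P] right_mult_one_mat[OF P] mult_minus_distrib_mat[of _ n n _ n] minus_mult_distrib_mat[of _ n n _ _ n]
        mult_smult_distrib[of _ n n _ n] mult_smult_assoc_mat[of _ n n _ n])
  have "transpose_mat (?X * ?P - x (Suc i) \<cdot>\<^sub>m ?Q)
      = transpose_mat ?X * transpose_mat ?P - x (Suc i) \<cdot>\<^sub>m transpose_mat ?Q"
    using X P Q XP by (simp add: transpose_minus[of _ n n] transpose_smult transpose_mult[of _ n n _ n])
  also have "\<dots> = mp n a x (transpose_mat M) (Suc (Suc i))"
    using Suc M by (simp add: transpose_minus[of _ n n] transpose_smult)
  finally show ?case using Suc by simp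
qed

lemma mp_transpose:
  fixes M :: "'a::field mat"
  assumes M: "M \<in> carrier_mat n n"
  shows "transpose_mat (mp n a x M i) = mp n a x (transpose_mat M) i"
  using mp_transpose2[OF M] by blast


lemma mp_col2:
  fixes T :: "'a::field mat"
  assumes T: "T \<in> carrier_mat n n"
    and tri: "\<And>j k. j < n \<Longrightarrow> k < n \<Longrightarrow> Suc j < k \<or> Suc k < j \<Longrightarrow> T $$ (j,k) = 0"
    and ad: "\<And>j. j < n \<Longrightarrow> a j = T $$ (j,j)"
    and xd: "\<And>j. 0 < j \<Longrightarrow> j < n \<Longrightarrow> x j = T $$ (j, j-1) * T $$ (j-1, j)"
  shows "(i < n \<longrightarrow> (\<forall>k<n. mp n a x T i $$ (k,0) = (if k = i then (\<Prod>l<i. T $$ (Suc l, l)) else 0)))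
    \<and> (Suc i < n \<longrightarrow> (\<forall>k<n. mp n a x T (Suc i) $$ (k,0) = (if k = Suc i then (\<Prod>l<Suc i. T $$ (Suc l, l)) else 0)))"
proof (induction i)
  case 0
  have "T $$ (k, 0) - a 0 * (if k = 0 then 1 else 0) = (if k = Suc 0 then T $$ (Suc 0, 0) else 0)"
    if "k < n" "Suc 0 < n" for k
    using that ad[of 0] tri[of k 0] by auto
  then show ?case using T by auto
next
  case (Suc i)
  have "mp n a x T (Suc (Suc i)) $$ (k, 0) =
       (if k = Suc (Suc i) then \<Prod>l<Suc (Suc i). T $$ (Suc l, l) else 0)"
    if k: "k < n" and n: "Suc (Suc i) < n" for k
  proof -
    let ?b = "\<lambda>i. \<Prod>l<i. T $$ (Suc l, l)"
    have IH1: "\<forall>k<n. mp n a x T (Suc i) $$ (k,0) = (if k = Suc i then ?b (Suc i) else 0)"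
      using Suc n by auto
    have IH0: "\<forall>k<n. mp n a x T i $$ (k,0) = (if k = i then ?b i else 0)"
      using Suc n by auto
    have "mp n a x T (Suc (Suc i)) $$ (k, 0) =
       (\<Sum>l<n. (T $$ (k,l) - a (Suc i) * (if k = l then 1 else 0)) * mp n a x T (Suc i) $$ (l,0))
        - x (Suc i) * mp n a x T i $$ (k,0)"
    proof -
      have P: "mp n a x T (Suc i) \<in> carrier_mat n n" "mp n a x T i \<in> carrier_mat n n" using T by auto
      show ?thesis using T k n carrier_matD[OF P(1)] carrier_matD[OF P(2)]
        by (simp add: row_col_entry)
    qed
    also have "\<dots> = (\<Sum>l<n. (T $$ (k,l) - a (Suc i) * (if k = l then 1 else 0)) * (if l = Suc i then ?b (Suc i) else 0))
        - x (Suc i) * (if k = i then ?b i else 0)"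
      using IH1 IH0 k by (auto intro!: sum.cong)
    also have "\<dots> = (T $$ (k, Suc i) - a (Suc i) * (if k = Suc i then 1 else 0)) * ?b (Suc i)
        - x (Suc i) * (if k = i then ?b i else 0)"
      using n by (simp add: sum.delta')
    also have "\<dots> = (if k = Suc (Suc i) then ?b (Suc (Suc i)) else 0)"
    proof -
      have bS: "?b (Suc i) = ?b i * T $$ (Suc i, i)" by simp
      have bSS: "?b (Suc (Suc i)) = ?b (Suc i) * T $$ (Suc (Suc i), Suc i)" by simp
      have xS: "x (Suc i) = T $$ (Suc i, i) * T $$ (i, Suc i)" using xd[of "Suc i"] n by simp
      have aS: "a (Suc i) = T $$ (Suc i, Suc i)" using ad[of "Suc i"] n by simp
      consider "k = i" | "k = Suc i" | "k = Suc (Suc i)" | "Suc (Suc i) < k \<or> Suc k < Suc i"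
        by linarith
      then show ?thesis
      proof cases
        case 1 then show ?thesis unfolding bS xS by (simp add: algebra_simps)
      next
        case 2 then show ?thesis unfolding aS by simp
      next
        case 3 then show ?thesis unfolding bSS by (simp add: mult.commute)
      next
        case 4 then show ?thesis using tri[of k "Suc i"] k n by auto
      qed
    qed
    finally show ?thesis .
  qed
  then show ?case using Suc by auto
qed

lemma mp_col:
  fixes T :: "'a::field mat"
  assumes T: "T \<in> carrier_mat n n"
    and tri: "\<And>j k. j < n \<Longrightarrow> k < n \<Longrightarrow> Suc j < k \<or> Suc k < j \<Longrightarrow> T $$ (j,k) = 0"
    and ad: "\<And>j. j < n \<Longrightarrow> a j = T $$ (j,j)"
    and xd: "\<And>j. 0 < j \<Longrightarrow> j < n \<Longrightarrow> x j = T $$ (j, j-1) * T $$ (j-1, j)"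
    and "i < n" "k < n"
  shows "mp n a x T i $$ (k,0) = (if k = i then (\<Prod>l<i. T $$ (Suc l, l)) else 0)"
  using mp_col2[OF T tri ad xd, of i] assms(5,6) by blast


lemma ev_step:
  fixes A :: "'a::field mat"
  assumes A: "A \<in> carrier_mat n n" and w: "w \<in> carrier_vec n" and Aw: "A *\<^sub>v w = t \<cdot>\<^sub>v w"
  shows "(c \<cdot>\<^sub>m (A - s \<cdot>\<^sub>m 1\<^sub>m n)) *\<^sub>v w = (c * (t - s)) \<cdot>\<^sub>v w"
proof (rule eq_vecI)
  fix i assume "i < dim_vec ((c * (t - s)) \<cdot>\<^sub>v w)"
  then have i: "i < n" using w by simp
  have h: "(\<Sum>l<n. A $$ (i, l) * w $ l) = t * w $ i"
    using arg_cong[OF Aw, of "\<lambda>u. u $ i"] A w i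
    by (simp add: scalar_prod_def atLeast0LessThan)
  have "((c \<cdot>\<^sub>m (A - s \<cdot>\<^sub>m 1\<^sub>m n)) *\<^sub>v w) $ i
      = (\<Sum>l<n. c * (A $$ (i, l) - s * (if i = l then 1 else 0)) * w $ l)"
    using A w i by (auto simp: scalar_prod_def atLeast0LessThan intro!: sum.cong)
  also have "\<dots> = (\<Sum>l<n. c * (A $$ (i,l) * w $ l) - (if l = i then c * s * w $ i else 0))"
    by (intro sum.cong) (auto simp: algebra_simps)
  also have "\<dots> = c * (\<Sum>l<n. A $$ (i, l) * w $ l) - c * s * w $ i"
    using i by (simp add: sum_subtractf sum_distrib_left sum.delta')
  also have "\<dots> = ((c * (t - s)) \<cdot>\<^sub>v w) $ i" using h i w by (simp add: algebra_simps)
  finally show "((c \<cdot>\<^sub>m (A - s \<cdot>\<^sub>m 1\<^sub>m n)) *\<^sub>v w) $ i = ((c * (t - s)) \<cdot>\<^sub>v w) $ i" .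
qed (use A w in auto)

lemma foldr_ev:
  fixes A :: "'a::field mat"
  assumes A: "A \<in> carrier_mat n n" and w: "w \<in> carrier_vec n" and Aw: "A *\<^sub>v w = t \<cdot>\<^sub>v w"
  shows "foldr (\<lambda>j M. ((1 / (tk - th j)) \<cdot>\<^sub>m (A - th j \<cdot>\<^sub>m 1\<^sub>m n)) * M) js (1\<^sub>m n) \<in> carrier_mat n n
    \<and> foldr (\<lambda>j M. ((1 / (tk - th j)) \<cdot>\<^sub>m (A - th j \<cdot>\<^sub>m 1\<^sub>m n)) * M) js (1\<^sub>m n) *\<^sub>v w
       = prod_list (map (\<lambda>j. (t - th j) / (tk - th j)) js) \<cdot>\<^sub>v w"
proof (induction js)
  case Nil
  then show ?case using w by simp
next
  case (Cons j js)
  let ?F = "foldr (\<lambda>j M. ((1 / (tk - th j)) \<cdot>\<^sub>m (A - th j \<cdot>\<^sub>m 1\<^sub>m n)) * M) js (1\<^sub>m n)"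
  let ?M = "(1 / (tk - th j)) \<cdot>\<^sub>m (A - th j \<cdot>\<^sub>m 1\<^sub>m n)"
  have F: "?F \<in> carrier_mat n n" using Cons by simp
  have M: "?M \<in> carrier_mat n n" using A by simp
  have "(?M * ?F) *\<^sub>v w = ?M *\<^sub>v (?F *\<^sub>v w)" using assoc_mult_mat_vec[OF M F w] .
  also have "\<dots> = prod_list (map (\<lambda>j. (t - th j) / (tk - th j)) js) \<cdot>\<^sub>v (?M *\<^sub>v w)"
    using Cons mult_mat_vec[OF M w] by simp
  also have "\<dots> = prod_list (map (\<lambda>j. (t - th j) / (tk - th j)) (j # js)) \<cdot>\<^sub>v w"
    using ev_step[OF A w Aw] by (simp add: smult_smult_assoc mult.commute)
  finally show ?case using mult_carrier_mat[OF M F] by simp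
qed

lemma prod_list_ones: "(\<forall>j\<in>set js. f j = (1::'a::field)) \<Longrightarrow> prod_list (map f js) = 1"
  by (induction js) auto

lemma prod_list_zero: "j \<in> set js \<Longrightarrow> f j = (0::'a::field) \<Longrightarrow> prod_list (map f js) = 0"
  by (induction js) auto

lemma diagonalize:
  fixes A :: "'a::field mat"
  assumes A: "A \<in> carrier_mat (Suc d) (Suc d)" and inj: "inj_on th {0..d}"
    and ev: "\<forall>i\<le>d. eigenvalue A (th i)"
  shows "\<exists>V Vi. V \<in> carrier_mat (Suc d) (Suc d) \<and> Vi \<in> carrier_mat (Suc d) (Suc d)
     \<and> V * Vi = 1\<^sub>m (Suc d) \<and> Vi * V = 1\<^sub>m (Suc d) \<and> Vi * A * V = dg (Suc d) th
     \<and> (\<forall>k\<le>d. prim_idem d A th k = V * un (Suc d) k k * Vi)"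
proof -
  let ?n = "Suc d"
  have "\<forall>i. \<exists>w. i \<le> d \<longrightarrow> eigenvector A w (th i)" using ev unfolding eigenvalue_def by auto
  from choice[OF this] obtain v where v: "\<And>i. i \<le> d \<Longrightarrow> eigenvector A (v i) (th i)" by auto
  have vc: "v i \<in> carrier_vec ?n" "v i \<noteq> 0\<^sub>v ?n" "A *\<^sub>v v i = th i \<cdot>\<^sub>v v i" if "i \<le> d" for i
    using v[OF that] A unfolding eigenvector_def by auto
  define E where "E k = prim_idem d A th k" for k
  have Ec: "E k \<in> carrier_mat ?n ?n" for k
    unfolding E_def prim_idem_def Suc_eq_plus1[symmetric]
    by (rule conjunct1[OF foldr_ev[OF A vc(1)[OF le0] vc(3)[OF le0]]])
  have Ev: "E k *\<^sub>v v l = (if l = k then v l else 0\<^sub>v ?n)" if k: "k \<le> d" and l: "l \<le> d" for k l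
  proof -
    have "E k *\<^sub>v v l = prod_list (map (\<lambda>j. (th l - th j) / (th k - th j)) (filter (\<lambda>j. j \<noteq> k) [0..<Suc d])) \<cdot>\<^sub>v v l"
      unfolding E_def prim_idem_def Suc_eq_plus1[symmetric]
      by (rule conjunct2[OF foldr_ev[OF A vc(1)[OF l] vc(3)[OF l]]])
    also have "\<dots> = (if l = k then v l else 0\<^sub>v ?n)"
    proof (cases "l = k")
      case True
      have "th k \<noteq> th j" if "j \<le> d" "j \<noteq> k" for j
        using inj_onD[OF inj, of k j] that k by auto
      then have "prod_list (map (\<lambda>j. (th l - th j) / (th k - th j)) (filter (\<lambda>j. j \<noteq> k) [0..<Suc d])) = 1"
        using True by (intro prod_list_ones) auto
      then show ?thesis using True by simp
    next
      case False
      have "prod_list (map (\<lambda>j. (th l - th j) / (th k - th j)) (filter (\<lambda>j. j \<noteq> k) [0..<Suc d])) = 0"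
        using False l by (intro prod_list_zero[of l]) auto
      then show ?thesis using False vc(1)[OF l] by auto
    qed
    finally show ?thesis .
  qed
  define V where "V = mat ?n ?n (\<lambda>(i,j). v j $ i)"
  have Vc: "V \<in> carrier_mat ?n ?n" unfolding V_def by simp
  have Vidx: "V $$ (i, j) = v j $ i" if "i < ?n" "j < ?n" for i j
    using that unfolding V_def by simp
  have colV: "col V j = v j" if "j < ?n" for j
    using that vc(1)[of j] unfolding V_def by (auto intro!: eq_vecI)
  have EV: "E k * V = V * un ?n k k" if k: "k \<le> d" for k
  proof (rule eq_matI)
    fix i j assume i: "i < dim_row (V * un ?n k k)" and j: "j < dim_col (V * un ?n k k)"
    then have i: "i < ?n" and j: "j < ?n" using Vc by auto
    have "(E k * V) $$ (i, j) = (E k *\<^sub>v v j) $ i"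
      using Ec[of k] Vc i j colV[OF j] by simp
    also have "\<dots> = (if j = k then v k $ i else 0)" using Ev[OF k, of j] j i by auto
    also have "\<dots> = (V * un ?n k k) $$ (i, j)"
      using i j k Vc by (simp add: row_col_entry sum.delta' Vidx)
    finally show "(E k * V) $$ (i, j) = (V * un ?n k k) $$ (i, j)" .
  qed (use Ec Vc in auto)
  have detV: "det V \<noteq> 0"
  proof
    assume "det V = 0"
    then obtain c where c: "c \<in> carrier_vec ?n" "c \<noteq> 0\<^sub>v ?n" "V *\<^sub>v c = 0\<^sub>v ?n"
      using det_0_iff_vec_prod_zero[OF Vc] by auto
    have "c $ k = 0" if k: "k \<le> d" for k
    proof -
      have "(V * un ?n k k) *\<^sub>v c = (E k * V) *\<^sub>v c" using EV[OF k] by simp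
      also have "\<dots> = E k *\<^sub>v (V *\<^sub>v c)" using Ec[of k] Vc c by simp
      also have "\<dots> = 0\<^sub>v ?n" using c(3) Ec[of k] by auto
      finally have "(V * un ?n k k) *\<^sub>v c = 0\<^sub>v ?n" .
      then have z: "\<And>i. i < ?n \<Longrightarrow> c $ k * v k $ i = 0"
      proof -
        fix i assume i: "i < ?n"
        assume h: "(V * un ?n k k) *\<^sub>v c = 0\<^sub>v ?n"
        have "((V * un ?n k k) *\<^sub>v c) $ i = (\<Sum>j<?n. (V * un ?n k k) $$ (i, j) * c $ j)"
          using i c Vc by (simp add: scalar_prod_def atLeast0LessThan)
        also have "\<dots> = (\<Sum>j<?n. (if j = k then v k $ i else 0) * c $ j)"
          using i k Vc by (intro sum.cong) (auto simp: row_col_entry sum.delta' Vidx)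
        also have "\<dots> = c $ k * v k $ i" using k by (simp add: sum.delta')
        finally show "c $ k * v k $ i = 0" using h i by simp
      qed
      show ?thesis
      proof (rule ccontr)
        assume "c $ k \<noteq> 0"
        then have "v k = 0\<^sub>v ?n" using z vc(1)[OF k] by (auto intro!: eq_vecI)
        then show False using vc(2)[OF k] by simp
      qed
    qed
    then have "c = 0\<^sub>v ?n" using c(1) by (auto intro!: eq_vecI)
    then show False using c(2) by simp
  qed
  from det_non_zero_imp_unit[OF Vc detV, of "()"]
  obtain Vi where Vi: "Vi \<in> carrier_mat ?n ?n" and ViV: "Vi * V = 1\<^sub>m ?n"
    unfolding Units_def ring_mat_def by auto
  have VVi: "V * Vi = 1\<^sub>m ?n" using mat_mult_left_right_inverse[OF Vi Vc ViV] .
  have Ek: "E k = V * un ?n k k * Vi" if k: "k \<le> d" for k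
  proof -
    have "E k = E k * (V * Vi)" using VVi Ec[of k] by simp
    also have "\<dots> = (E k * V) * Vi" using Ec[of k] Vc Vi by simp
    finally show ?thesis using EV[OF k] by simp
  qed
  have AV: "A * V = V * dg ?n th"
  proof (rule eq_matI)
    fix i j assume i: "i < dim_row (V * dg ?n th)" and j: "j < dim_col (V * dg ?n th)"
    then have i: "i < ?n" and j: "j < ?n" using Vc by auto
    have "(A * V) $$ (i, j) = (A *\<^sub>v v j) $ i"
      using A Vc i j colV[OF j] by simp
    also have "\<dots> = th j * v j $ i" using vc(1,3)[of j] j i by auto
    also have "\<dots> = (V * dg ?n th) $$ (i, j)"
      using i j Vc by (simp add: row_col_entry sum.delta' Vidx)
    finally show "(A * V) $$ (i, j) = (V * dg ?n th) $$ (i, j)" .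
  qed (use A Vc in auto)
  have "Vi * A * V = dg ?n th"
  proof -
    have "Vi * A * V = Vi * (A * V)" using Vi A Vc by simp
    also have "\<dots> = (Vi * V) * dg ?n th" unfolding AV using assoc_mult_mat[OF Vi Vc dg_carrier] by simp
    finally show ?thesis using ViV by simp
  qed
  then show ?thesis using Vc Vi VVi ViV Ek unfolding E_def by blast
qed


lemma un_mult_un:
  fixes M :: "'a::field mat"
  assumes M: "M \<in> carrier_mat n n" and "a < n" "b < n" "c < n" "e < n"
  shows "un n a b * M * un n c e = M $$ (b, c) \<cdot>\<^sub>m un n a e"
proof (rule eq_matI)
  fix i j assume "i < dim_row (M $$ (b, c) \<cdot>\<^sub>m un n a e)" "j < dim_col (M $$ (b, c) \<cdot>\<^sub>m un n a e)"
  then have i: "i < n" and j: "j < n" by auto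
  have "(un n a b * M * un n c e) $$ (i, j) = (\<Sum>l<n. (un n a b * M) $$ (i, l) * (if l = c \<and> j = e then 1 else 0))"
    using i j M by (simp add: row_col_entry)
  also have "\<dots> = (if j = e then (un n a b * M) $$ (i, c) else 0)"
    using assms(4) by (auto simp: sum.delta' intro: sum.neutral)
  also have "\<dots> = (if j = e then (\<Sum>l<n. (if i = a \<and> l = b then 1 else 0) * M $$ (l, c)) else 0)"
    using i M assms by (simp add: row_col_entry)
  also have "\<dots> = (M $$ (b, c) \<cdot>\<^sub>m un n a e) $$ (i, j)"
    using i j assms by (auto simp: sum.delta intro: sum.neutral)
  finally show "(un n a b * M * un n c e) $$ (i, j) = (M $$ (b, c) \<cdot>\<^sub>m un n a e) $$ (i, j)" .
qed (use M in auto)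

lemma mtrace_un:
  fixes M :: "'a::field mat"
  assumes M: "M \<in> carrier_mat n n" and "a < n" "b < n"
  shows "mtrace (un n a b * M) = M $$ (b, a)"
proof -
  have "mtrace (un n a b * M) = (\<Sum>i<n. \<Sum>l<n. (if i = a \<and> l = b then 1 else 0) * M $$ (l, i))"
    unfolding mtrace_def using M by (auto simp: row_col_entry intro!: sum.cong)
  also have "\<dots> = (\<Sum>i<n. if i = a then M $$ (b, i) else 0)"
    using assms by (intro sum.cong) (auto simp: sum.delta intro: sum.neutral)
  also have "\<dots> = M $$ (b, a)" using assms by (simp add: sum.delta)
  finally show ?thesis .
qed

lemma mtrace_dg:
  fixes Z :: "'a::field mat"
  assumes Z: "Z \<in> carrier_mat n n"
  shows "mtrace (dg n f * Z) = (\<Sum>r<n. f r * Z $$ (r, r))"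
  unfolding mtrace_def using Z by (auto simp: row_col_entry sum.delta intro!: sum.cong)

lemma mtrace_smult: "M \<in> carrier_mat n n \<Longrightarrow> mtrace (c \<cdot>\<^sub>m M) = c * mtrace M"
  unfolding mtrace_def by (auto simp: sum_distrib_left intro!: sum.cong)

lemma trace_conj:
  fixes V X Vi B :: "'a::field mat"
  assumes "V \<in> carrier_mat n n" "X \<in> carrier_mat n n" "Vi \<in> carrier_mat n n" "B \<in> carrier_mat n n"
  shows "mtrace (V * X * Vi * B) = mtrace (X * (Vi * B * V))"
proof -
  have "mtrace (V * X * Vi * B) = mtrace (V * (X * Vi * B))"
    using assms by (simp add: assoc_mult_mat[of _ n n _ n _ n])
  also have "\<dots> = mtrace ((X * Vi * B) * V)"
    using assms by (intro mtrace_comm[of _ n n]) auto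
  also have "\<dots> = mtrace (X * (Vi * B * V))"
    using assms by (simp add: assoc_mult_mat[of _ n n _ n _ n])
  finally show ?thesis .
qed

lemma smult_zero_imp:
  fixes M :: "'a::field mat"
  assumes "M \<in> carrier_mat n n" "c \<cdot>\<^sub>m M = 0\<^sub>m n n" "i < n" "j < n" "M $$ (i, j) \<noteq> 0"
  shows "c = 0"
proof -
  have "(c \<cdot>\<^sub>m M) $$ (i,j) = c * M $$ (i,j)" using assms(1,3,4) by auto
  then have "c * M $$ (i,j) = 0" using assms(2,3,4) by simp
  then show ?thesis using assms(5) by simp
qed

lemma conj_un_entry:
  fixes W Wi :: "'a::field mat"
  assumes W: "W \<in> carrier_mat n n" and Wi: "Wi \<in> carrier_mat n n" and WiW: "Wi * W = 1\<^sub>m n"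
    and ab: "a < n" "b < n"
  shows "\<exists>i<n. \<exists>j<n. (W * un n a b * Wi) $$ (i, j) \<noteq> 0"
proof (rule ccontr)
  assume "\<not> ?thesis"
  then have z: "W * un n a b * Wi = 0\<^sub>m n n" using W Wi by (intro eq_matI) auto
  have "un n a b = (Wi * W) * un n a b * (Wi * W)" using WiW by simp
  also have "\<dots> = Wi * (W * un n a b * Wi) * W"
  proof -
    have c: "W * un n a b \<in> carrier_mat n n" "W * un n a b * Wi \<in> carrier_mat n n"
      "Wi * W \<in> carrier_mat n n" "Wi * W * un n a b \<in> carrier_mat n n"
      "un n a b * (Wi * W) \<in> carrier_mat n n" "un n a b * Wi \<in> carrier_mat n n"
      "Wi * (W * un n a b * Wi) \<in> carrier_mat n n"
      using W Wi by auto
    show ?thesis using W Wi c by (simp add: assoc_mult_mat[of _ n n _ n _ n])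
  qed
  also have "\<dots> = 0\<^sub>m n n" unfolding z using W Wi by simp
  finally have "un n a b $$ (a, b) = (0\<^sub>m n n :: 'a mat) $$ (a, b)" by simp
  then show False using ab by simp
qed

lemma dual_orth:
  fixes P :: "nat \<Rightarrow> nat \<Rightarrow> 'a::field"
  assumes orth: "\<And>i j. i < n \<Longrightarrow> j < n \<Longrightarrow> (\<Sum>r<n. P i r * P j r * m r) = (if i = j then h i else 0)"
    and hnz: "\<And>i. i < n \<Longrightarrow> h i \<noteq> 0"
    and rs: "r < n" "s < n"
  shows "(\<Sum>i<n. P i r * P i s / h i) = (if r = s then inverse (m r) else 0)"
proof -
  define PM where "PM = mat n n (\<lambda>(i,r). P i r)"
  have PMc: "PM \<in> carrier_mat n n" unfolding PM_def by simp
  have PMi: "PM $$ (i, r) = P i r" if "i < n" "r < n" for i r using that unfolding PM_def by simp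
  have 1: "PM * dg n m * transpose_mat PM = dg n h"
  proof (rule eq_matI)
    fix i j assume "i < dim_row (dg n h)" "j < dim_col (dg n h)"
    then have i: "i < n" and j: "j < n" by auto
    have "(PM * dg n m * transpose_mat PM) $$ (i, j) = (\<Sum>r<n. (PM * dg n m) $$ (i, r) * PM $$ (j, r))"
      using i j PMc by (simp add: row_row_entry)
    also have "\<dots> = (\<Sum>r<n. P i r * P j r * m r)"
      using i j PMc by (intro sum.cong) (auto simp: row_col_entry PMi sum.delta')
    also have "\<dots> = dg n h $$ (i, j)" using orth[OF i j] i j by simp
    finally show "(PM * dg n m * transpose_mat PM) $$ (i, j) = dg n h $$ (i, j)" .
  qed (use PMc in auto)
  have 2: "dg n h * dg n (\<lambda>i. inverse (h i)) = 1\<^sub>m n"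
    unfolding dg_mult one_dg by (intro eq_matI) (auto simp: hnz)
  let ?B = "dg n m * transpose_mat PM * dg n (\<lambda>i. inverse (h i))"
  have PTc: "transpose_mat PM \<in> carrier_mat n n" using PMc by simp
  have Bc: "?B \<in> carrier_mat n n" using mult_carrier_mat[OF mult_carrier_mat[OF dg_carrier PTc] dg_carrier] .
  have "PM * ?B = (PM * dg n m * transpose_mat PM) * dg n (\<lambda>i. inverse (h i))"
    using assoc_mult_mat[OF PMc mult_carrier_mat[OF dg_carrier PTc] dg_carrier, symmetric]
      assoc_mult_mat[OF PMc dg_carrier PTc] by simp
  also have "\<dots> = 1\<^sub>m n" using 1 2 by simp
  finally have "PM * ?B = 1\<^sub>m n" .
  from mat_mult_left_right_inverse[OF PMc Bc this]
  have "?B * PM = 1\<^sub>m n" .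
  then have 3: "dg n m * (transpose_mat PM * dg n (\<lambda>i. inverse (h i)) * PM) = 1\<^sub>m n"
    using PMc by (simp add: assoc_mult_mat[of _ n n _ n _ n])
  define Q where "Q r s = (\<Sum>i<n. P i r * P i s / h i)" for r s
  have QQ: "(transpose_mat PM * dg n (\<lambda>i. inverse (h i)) * PM) $$ (r, s) = Q r s"
    if "r < n" "s < n" for r s
  proof -
    have "(transpose_mat PM * dg n (\<lambda>i. inverse (h i)) * PM) $$ (r, s)
        = (\<Sum>i<n. (transpose_mat PM * dg n (\<lambda>i. inverse (h i))) $$ (r, i) * PM $$ (i, s))"
      using that PMc by (simp add: row_col_entry)
    also have "\<dots> = Q r s" unfolding Q_def
      using that PMc by (intro sum.cong) (auto simp: row_col_entry col_col_entry PMi sum.delta' divide_inverse)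
    finally show ?thesis .
  qed
  have 4: "m r * Q r s = (if r = s then 1 else 0)" if "r < n" "s < n" for r s
  proof -
    have "(dg n m * (transpose_mat PM * dg n (\<lambda>i. inverse (h i)) * PM)) $$ (r, s) = m r * Q r s"
      using that PMc QQ by (simp add: row_col_entry sum.delta)
    then show ?thesis using 3 that by simp
  qed
  show ?thesis
  proof (cases "r = s")
    case True
    have "inverse (m r) = Q r r" using 4[OF rs(1) rs(1)] by (intro inverse_unique) simp
    then show ?thesis using True unfolding Q_def by simp
  next
    case False
    have "m r \<noteq> 0" using 4[OF rs(1) rs(1)] by auto
    then show ?thesis using 4[OF rs] False unfolding Q_def by simp
  qed
qed


lemma zero_smult_mat': "M \<in> carrier_mat n n \<Longrightarrow> (0::'a::field) \<cdot>\<^sub>m M = 0\<^sub>m n n"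
  by (intro eq_matI) auto

theorem theorem18p4:
  fixes d :: nat and A As :: "'a::field mat" and E Es :: "nat \<Rightarrow> 'a mat"
    and th :: "nat \<Rightarrow> 'a"
  assumes "leonard_system d A As E Es"
    and "inj_on th {0..d}" and "\<forall>i\<le>d. eigenvalue A (th i)"
    and "\<forall>i\<le>d. E i = prim_idem d A th i"
  shows "(\<forall>i\<le>d. \<forall>j\<le>d.
            (\<Sum>r\<le>d. poly (ls_p (ls_a A Es) (ls_x A Es) i) (th r)
                    * poly (ls_p (ls_a A Es) (ls_x A Es) j) (th r) * ls_m E Es r)
            = (if i = j then (\<Prod>k\<in>{1..i}. ls_x A Es k) else 0))
       \<and> (\<forall>r\<le>d. \<forall>s\<le>d.
            (\<Sum>i\<le>d. poly (ls_p (ls_a A Es) (ls_x A Es) i) (th r)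
                    * poly (ls_p (ls_a A Es) (ls_x A Es) i) (th s)
                    / (\<Prod>k\<in>{1..i}. ls_x A Es k))
            = (if r = s then inverse (ls_m E Es r) else 0))"
proof -
  let ?n = "Suc d"
  let ?a = "ls_a A Es"
  let ?x = "ls_x A Es"
  let ?p = "ls_p ?a ?x"
  note L = assms(1)[unfolded leonard_system_def]
  have mfA: "multiplicity_free d A" using conjunct1[OF L] .
  have mfAs: "multiplicity_free d As" using conjunct1[OF conjunct2[OF L]] .
  have ioAs: "idem_ordering d As Es" using conjunct1[OF conjunct2[OF conjunct2[OF conjunct2[OF L]]]] .
  have triEs: "\<forall>i\<le>d. \<forall>j\<le>d.
        (i > j + 1 \<or> j > i + 1 \<longrightarrow> Es i * A * Es j = 0\<^sub>m (d+1) (d+1)) \<and>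
        (i = j + 1 \<or> j = i + 1 \<longrightarrow> Es i * A * Es j \<noteq> 0\<^sub>m (d+1) (d+1))"
    using conjunct2[OF conjunct2[OF conjunct2[OF conjunct2[OF conjunct2[OF L]]]]] .
  have Ac0: "A \<in> carrier_mat (d+1) (d+1)" using mfA unfolding multiplicity_free_def by (rule conjunct1)
  have Asc0: "As \<in> carrier_mat (d+1) (d+1)" using mfAs unfolding multiplicity_free_def by (rule conjunct1)
  have Ac: "A \<in> carrier_mat ?n ?n" using Ac0 by simp
  have Asc: "As \<in> carrier_mat ?n ?n" using Asc0 by simp
  obtain ths where ths: "inj_on ths {0..d}" "\<forall>i\<le>d. eigenvalue As (ths i)"
    "\<forall>i\<le>d. Es i = prim_idem d As ths i" using ioAs unfolding idem_ordering_def by blast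
  have tri0: "Es i * A * Es j = 0\<^sub>m ?n ?n" if "i \<le> d" "j \<le> d" "i > j + 1 \<or> j > i + 1" for i j
  proof -
    have "Es i * A * Es j = 0\<^sub>m (d+1) (d+1)" using triEs that by blast
    then show ?thesis by simp
  qed
  have tri1: "Es i * A * Es j \<noteq> 0\<^sub>m ?n ?n" if "i \<le> d" "j \<le> d" "i = j + 1 \<or> j = i + 1" for i j
  proof -
    have "Es i * A * Es j \<noteq> 0\<^sub>m (d+1) (d+1)" using triEs that by blast
    then show ?thesis by simp
  qed
  obtain V Vi where Vc: "V \<in> carrier_mat ?n ?n" and Vic: "Vi \<in> carrier_mat ?n ?n"
    and VVi: "V * Vi = 1\<^sub>m ?n" and ViV: "Vi * V = 1\<^sub>m ?n" and ViAV: "Vi * A * V = dg ?n th"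
    and Ei: "\<forall>k\<le>d. prim_idem d A th k = V * un ?n k k * Vi"
    using diagonalize[OF Ac assms(2,3)] by blast
  obtain W Wi where Wc: "W \<in> carrier_mat ?n ?n" and Wic: "Wi \<in> carrier_mat ?n ?n"
    and WWi: "W * Wi = 1\<^sub>m ?n" and WiW: "Wi * W = 1\<^sub>m ?n"
    and Esi0: "\<forall>k\<le>d. prim_idem d As ths k = W * un ?n k k * Wi"
    using diagonalize[OF Asc ths(1,2)] by blast
  have E: "E r = V * un ?n r r * Vi" if "r \<le> d" for r using Ei assms(4) that by simp
  have Es: "Es r = W * un ?n r r * Wi" if "r \<le> d" for r using Esi0 ths(3) that by simp
  define Y where "Y = Wi * A * W"
  have Yc: "Y \<in> carrier_mat ?n ?n" unfolding Y_def using Wic Ac Wc by simp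
  note sq = mult_carrier_mat[of _ ?n ?n _ ?n] assoc_mult_mat[of _ ?n ?n _ ?n _ ?n]
  have EAE: "Es i * A * Es j = Y $$ (i, j) \<cdot>\<^sub>m (W * un ?n i j * Wi)" if ij: "i \<le> d" "j \<le> d" for i j
  proof -
    have "Es i * A * Es j = W * (un ?n i i * Y * un ?n j j) * Wi"
      unfolding Es[OF ij(1)] Es[OF ij(2)] Y_def using Wc Wic Ac by (simp add: sq)
    also have "\<dots> = W * (Y $$ (i, j) \<cdot>\<^sub>m un ?n i j) * Wi"
      using un_mult_un[OF Yc] ij by simp
    also have "\<dots> = Y $$ (i, j) \<cdot>\<^sub>m (W * un ?n i j * Wi)"
      using Wc Wic by (simp add: mult_smult_distrib[of _ ?n ?n _ ?n] mult_smult_assoc_mat[of _ ?n ?n _ ?n])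
    finally show ?thesis .
  qed
  have ad: "?a j = Y $$ (j, j)" if "j < ?n" for j
  proof -
    have "?a j = mtrace (W * un ?n j j * Wi * A)" unfolding ls_a_def using Es[of j] that by simp
    also have "\<dots> = mtrace (un ?n j j * Y)" unfolding Y_def
      using trace_conj[OF Wc un_carrier Wic Ac] by simp
    also have "\<dots> = Y $$ (j, j)" using mtrace_un[OF Yc] that by simp
    finally show ?thesis .
  qed
  have xd: "?x j = Y $$ (j, j - 1) * Y $$ (j - 1, j)" if "0 < j" "j < ?n" for j
  proof -
    have "?x j = mtrace ((Y $$ (j, j - 1) \<cdot>\<^sub>m (W * un ?n j (j - 1) * Wi)) * A)"
      unfolding ls_x_def using that EAE[of j "j - 1"] by simp
    also have "\<dots> = Y $$ (j, j - 1) * mtrace (W * un ?n j (j - 1) * Wi * A)"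
    proof -
      have c: "W * un ?n j (j - 1) * Wi \<in> carrier_mat ?n ?n" using Wc Wic by (simp add: sq)
      show ?thesis using mult_smult_assoc_mat[OF c Ac] mtrace_smult[OF mult_carrier_mat[OF c Ac]] by simp
    qed
    also have "mtrace (W * un ?n j (j - 1) * Wi * A) = mtrace (un ?n j (j - 1) * Y)" unfolding Y_def
      using trace_conj[OF Wc un_carrier Wic Ac] by simp
    also have "\<dots> = Y $$ (j - 1, j)" using mtrace_un[OF Yc] that by simp
    finally show ?thesis .
  qed
  have Ytri: "Y $$ (j, k) = 0" if jk: "j < ?n" "k < ?n" "Suc j < k \<or> Suc k < j" for j k
  proof -
    have "Y $$ (j, k) \<cdot>\<^sub>m (W * un ?n j k * Wi) = 0\<^sub>m ?n ?n"
      using tri0[of j k] EAE[of j k] that by auto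
    moreover obtain i' j' where "i' < ?n" "j' < ?n" "(W * un ?n j k * Wi) $$ (i', j') \<noteq> 0"
      using conj_un_entry[OF Wc Wic WiW, of j k] jk by auto
    ultimately show ?thesis using smult_zero_imp[of "W * un ?n j k * Wi" ?n] Wc Wic by (auto simp: sq)
  qed
  have Ynz: "Y $$ (j, k) \<noteq> 0" if "j \<le> d" "k \<le> d" "j = k + 1 \<or> k = j + 1" for j k
  proof
    assume "Y $$ (j, k) = 0"
    moreover have c: "W * un ?n j k * Wi \<in> carrier_mat ?n ?n" using Wc Wic by (simp add: sq)
    ultimately have "Es j * A * Es k = 0\<^sub>m ?n ?n" using EAE[of j k] that zero_smult_mat'[OF c] by simp
    then show False using tri1[of j k] that by simp
  qed
  have xnz: "?x k \<noteq> 0" if "1 \<le> k" "k \<le> d" for k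
    using xd[of k] Ynz[of k "k - 1"] Ynz[of "k - 1" k] that by auto
  let ?YT = "transpose_mat Y"
  have YTc: "?YT \<in> carrier_mat ?n ?n" using Yc by simp
  have colY: "mp ?n ?a ?x Y i $$ (k, 0) = (if k = i then (\<Prod>l<i. Y $$ (Suc l, l)) else 0)"
    if "i < ?n" "k < ?n" for i k
    by (rule mp_col[OF Yc Ytri ad xd that]) auto
  have rowY: "mp ?n ?a ?x Y i $$ (0, k) = (if k = i then (\<Prod>l<i. Y $$ (l, Suc l)) else 0)"
    if ik: "i < ?n" "k < ?n" for i k
  proof -
    have "mp ?n ?a ?x Y i $$ (0, k) = transpose_mat (mp ?n ?a ?x Y i) $$ (k, 0)"
      using ik Yc by (simp add: carrier_matD[OF mp_carrier[OF Yc]])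
    also have "\<dots> = mp ?n ?a ?x ?YT i $$ (k, 0)" using mp_transpose[OF Yc] by simp
    also have "\<dots> = (if k = i then (\<Prod>l<i. ?YT $$ (Suc l, l)) else 0)"
    proof (rule mp_col[OF YTc _ _ _ ik])
      show "\<And>j k. j < ?n \<Longrightarrow> k < ?n \<Longrightarrow> Suc j < k \<or> Suc k < j \<Longrightarrow> ?YT $$ (j, k) = 0"
        using Ytri Yc by auto
      show "\<And>j. j < ?n \<Longrightarrow> ?a j = ?YT $$ (j, j)" using ad Yc by auto
      show "\<And>j. 0 < j \<Longrightarrow> j < ?n \<Longrightarrow> ?x j = ?YT $$ (j, j - 1) * ?YT $$ (j - 1, j)"
        using xd Yc by (auto simp: mult.commute)
    qed
    also have "\<dots> = (if k = i then (\<Prod>l<i. Y $$ (l, Suc l)) else 0)"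
      using ik Yc by (auto intro!: prod.cong)
    finally show ?thesis .
  qed
  have G00: "(mp ?n ?a ?x Y i * mp ?n ?a ?x Y j) $$ (0, 0) = (if i = j then (\<Prod>k\<in>{1..i}. ?x k) else 0)"
    if ij: "i \<le> d" "j \<le> d" for i j
  proof -
    have "(mp ?n ?a ?x Y i * mp ?n ?a ?x Y j) $$ (0, 0)
       = (\<Sum>k<?n. mp ?n ?a ?x Y i $$ (0, k) * mp ?n ?a ?x Y j $$ (k, 0))"
      using Yc by (simp add: row_col_entry carrier_matD[OF mp_carrier[OF Yc]])
    also have "\<dots> = (\<Sum>k<?n. (if k = i then (\<Prod>l<i. Y $$ (l, Suc l)) else 0)
                          * (if k = j then (\<Prod>l<j. Y $$ (Suc l, l)) else 0))"
      using ij by (intro sum.cong) (simp_all add: rowY colY)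
    also have "\<dots> = (if i = j then (\<Prod>l<i. Y $$ (l, Suc l)) * (\<Prod>l<i. Y $$ (Suc l, l)) else 0)"
      using ij by (auto simp: sum.delta)
    also have "(\<Prod>l<i. Y $$ (l, Suc l)) * (\<Prod>l<i. Y $$ (Suc l, l)) = (\<Prod>l<i. ?x (Suc l))"
      unfolding prod.distrib[symmetric] using ij by (intro prod.cong) (auto simp: xd mult.commute)
    also have "\<dots> = (\<Prod>k\<in>{1..i}. ?x k)" using prod.atLeast1_atMost_eq[of ?x i] by simp
    finally show ?thesis .
  qed
  have mpW: "mp ?n ?a ?x A i = W * mp ?n ?a ?x Y i * Wi" for i
  proof -
    have "W * mp ?n ?a ?x Y i * Wi = W * (Wi * mp ?n ?a ?x A i * W) * Wi"
      unfolding Y_def using mp_conj[OF Wc Wic WWi WiW Ac] by simp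
    also have "\<dots> = (W * Wi) * mp ?n ?a ?x A i * (W * Wi)"
      using Wc Wic mp_carrier[OF Ac] by (simp add: sq)
    finally show ?thesis using WWi carrier_matD[OF mp_carrier[OF Ac]] by simp
  qed
  have mpV: "mp ?n ?a ?x A i = V * dg ?n (\<lambda>r. poly (?p i) (th r)) * Vi" for i
  proof -
    have "V * dg ?n (\<lambda>r. poly (?p i) (th r)) * Vi = V * (Vi * mp ?n ?a ?x A i * V) * Vi"
      using mp_conj[OF Vc Vic VVi ViV Ac] ViAV mp_diag by metis
    also have "\<dots> = (V * Vi) * mp ?n ?a ?x A i * (V * Vi)"
      using Vc Vic mp_carrier[OF Ac] by (simp add: sq)
    finally show ?thesis using VVi carrier_matD[OF mp_carrier[OF Ac]] by simp
  qed
  define Z where "Z = Vi * Es 0 * V"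
  have Es0c: "Es 0 \<in> carrier_mat ?n ?n" using Es[of 0] Wc Wic by (simp add: sq)
  have Zc: "Z \<in> carrier_mat ?n ?n" unfolding Z_def using Vic Es0c Vc by simp
  have mr: "ls_m E Es r = Z $$ (r, r)" if "r \<le> d" for r
  proof -
    have "ls_m E Es r = mtrace (V * un ?n r r * Vi * Es 0)" unfolding ls_m_def using E[OF that] by simp
    also have "\<dots> = mtrace (un ?n r r * Z)" unfolding Z_def using trace_conj[OF Vc un_carrier Vic Es0c] by simp
    also have "\<dots> = Z $$ (r, r)" using mtrace_un[OF Zc] that by simp
    finally show ?thesis .
  qed
  have S: "mtrace (mp ?n ?a ?x A i * mp ?n ?a ?x A j * Es 0)
      = (\<Sum>r<?n. poly (?p i) (th r) * poly (?p j) (th r) * Z $$ (r, r))" for i j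
  proof -
    let ?Di = "dg ?n (\<lambda>r. poly (?p i) (th r))"
    let ?Dj = "dg ?n (\<lambda>r. poly (?p j) (th r))"
    have "mp ?n ?a ?x A i * mp ?n ?a ?x A j = V * (?Di * ?Dj) * Vi"
      unfolding mpV using conj_lemmas(1)[OF Vic Vc ViV VVi dg_carrier dg_carrier] by simp
    then have "mtrace (mp ?n ?a ?x A i * mp ?n ?a ?x A j * Es 0) = mtrace ((?Di * ?Dj) * Z)"
      unfolding Z_def using trace_conj[OF Vc mult_carrier_mat[OF dg_carrier dg_carrier] Vic Es0c] by simp
    also have "\<dots> = (\<Sum>r<?n. poly (?p i) (th r) * poly (?p j) (th r) * Z $$ (r, r))"
      unfolding dg_mult using mtrace_dg[OF Zc] by simp
    finally show ?thesis .
  qed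
  have T: "mtrace (mp ?n ?a ?x A i * mp ?n ?a ?x A j * Es 0)
      = (mp ?n ?a ?x Y i * mp ?n ?a ?x Y j) $$ (0, 0)" for i j
  proof -
    let ?G = "mp ?n ?a ?x Y i * mp ?n ?a ?x Y j"
    have Gc: "?G \<in> carrier_mat ?n ?n" using mult_carrier_mat[OF mp_carrier[OF Yc] mp_carrier[OF Yc]] .
    have "mp ?n ?a ?x A i * mp ?n ?a ?x A j * Es 0 = W * (?G * un ?n 0 0) * Wi"
      unfolding mpW Es[OF le0]
      using conj_lemmas(1)[OF Wic Wc WiW WWi mp_carrier[OF Yc] mp_carrier[OF Yc]]
        conj_lemmas(1)[OF Wic Wc WiW WWi Gc un_carrier] by simp
    then have "mtrace (mp ?n ?a ?x A i * mp ?n ?a ?x A j * Es 0) = mtrace ((?G * un ?n 0 0) * (Wi * 1\<^sub>m ?n * W))"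
      using trace_conj[OF Wc _ Wic one_carrier_mat, of "?G * un ?n 0 0"] Gc Wc Wic by simp
    also have "\<dots> = mtrace (un ?n 0 0 * ?G)" using WiW Gc Wic by (simp add: mtrace_comm[of _ ?n ?n])
    also have "\<dots> = ?G $$ (0, 0)" using mtrace_un[OF Gc] by simp
    finally show ?thesis .
  qed
  have part1: "(\<Sum>r\<le>d. poly (?p i) (th r) * poly (?p j) (th r) * ls_m E Es r)
      = (if i = j then (\<Prod>k\<in>{1..i}. ?x k) else 0)" if ij: "i \<le> d" "j \<le> d" for i j
  proof -
    have "(\<Sum>r\<le>d. poly (?p i) (th r) * poly (?p j) (th r) * ls_m E Es r)
        = (\<Sum>r<?n. poly (?p i) (th r) * poly (?p j) (th r) * Z $$ (r, r))"
      unfolding lessThan_Suc_atMost by (intro sum.cong) (auto simp: mr)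
    also have "\<dots> = (mp ?n ?a ?x Y i * mp ?n ?a ?x Y j) $$ (0, 0)" using S T by metis
    also have "\<dots> = (if i = j then (\<Prod>k\<in>{1..i}. ?x k) else 0)" using G00[OF ij] .
    finally show ?thesis .
  qed
  have part2: "(\<Sum>i\<le>d. poly (?p i) (th r) * poly (?p i) (th s) / (\<Prod>k\<in>{1..i}. ?x k))
      = (if r = s then inverse (ls_m E Es r) else 0)" if rs: "r \<le> d" "s \<le> d" for r s
  proof -
    have "(\<Sum>i<?n. poly (?p i) (th r) * poly (?p i) (th s) / (\<Prod>k\<in>{1..i}. ?x k))
      = (if r = s then inverse (ls_m E Es r) else 0)"
    proof (rule dual_orth[of ?n "\<lambda>i r. poly (?p i) (th r)" "ls_m E Es" "\<lambda>i. \<Prod>k\<in>{1..i}. ?x k"])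
      show "(\<Sum>r<?n. poly (?p i) (th r) * poly (?p j) (th r) * ls_m E Es r)
          = (if i = j then \<Prod>k\<in>{1..i}. ?x k else 0)" if "i < ?n" "j < ?n" for i j
        using part1[of i j] that unfolding lessThan_Suc_atMost by simp
      show "(\<Prod>k\<in>{1..i}. ?x k) \<noteq> 0" if "i < ?n" for i
        using xnz that by (auto simp: prod_zero_iff)
    qed (use rs in auto)
    then show ?thesis unfolding lessThan_Suc_atMost .
  qed
  show ?thesis using part1 part2 by blast
qed

end
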